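(* Fix $m\ge1$, integers $t,s\ge0$, and $N\ge0$; set $n:=|\xi|-2N$ and assume $n\ge0$. (a) Let $\xi=(m^t,1^s)$ and write $s-2N=qm+\rho$ with $q\in\mathbb Z$, $0\le\rho<m$. Then $V^{\xi\to m}_{tm+s-2N}(1)=[x^N]\,p_{m-\rho-1}(x)/p_m(x)^{q+1}$. If $q<0$ this equals $0$. If $q\ge0$ it equals the number of tuples $(P_0,\dots,P_q)$ with $P_0\in\mathcal D_m(0,m-\rho-1;u_0)$, $P_\nu\in\mathcal D_m(0,0;u_\nu)$ ($1\le\nu\le q$), and $u_0+\cdots+u_q=N$. (b) Let $\xi=(m^t,r,1^s)$ with $1\le r\le m-1$, and write $r+s-2N=qm+\rho$, $q\in\mathbb Z$, $0\le\rho<m$. Then $V^{\xi\to m}_{tm+r+s-2N}(1)=[x^N]\,p_r(x)p_{m-\rho-1}(x)/p_m(x)^{q+1}$. If $q<0$ this equals $0$. If $q=0$ and $2N\le s$, it equals $D_m(r,m-r-s+2N-1;N)$. If $q\ge1$, it equals the number of tuples $(P_0,\dots,P_q)$ with $P_0\in\mathcal D_m(0,m-\rho-1;u_0)$, $P_1\in\mathcal D_m(r,0;u_1)$, $P_\nu\in\mathcal D_m(0,0;u_\nu)$ ($2\le\nu\le q$), and $u_0+\cdots+u_q=N$. (c) Let $\xi=(m^t,r_1,\dots,r_d,1^s)$ with $1\le r_i\le m-1$, and write $r_1+\cdots+r_d+s-2N=qm+\rho$, $q\in\mathbb Z$, $0\le\rho<m$. Then $V^{\xi\to m}_{tm+r_1+\cdots+r_d+s-2N}(1)=[x^N]\,p_{m-\rho-1}(x)\prod_{i=1}^dp_{r_i}(x)/p_m(x)^{q+1}$.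 If $q<0$ this equals $0$. If $q\ge d$, it equals the number of tuples $(P_0,\dots,P_q)$ with $P_0\in\mathcal D_m(0,m-\rho-1;u_0)$, $P_i\in\mathcal D_m(r_i,0;u_i)$ ($1\le i\le d$), $P_\nu\in\mathcal D_m(0,0;u_\nu)$ ($d+1\le\nu\le q$), and $u_0+\cdots+u_q=N$.
   Context: $p_0=p_1=1$, $p_{r+1}(x)=p_r(x)-xp_{r-1}(x)$ ($r\ge1$); $p_\xi=\prod_ip_{\xi_i}$; $|\xi|$ is the sum of parts; $m^t$ denotes $t$ parts equal to $m$, with parts arranged in nonincreasing order. For a power series $f=\sum c_rx^r$, $[x^j]f=c_j$ if $j\ge0$ and $0$ otherwise; negative powers $p_m^{-(q+1)}$ with $q+1\le 0$ mean the polynomial $p_m^{|q+1|}$. Numerical Demazure multiplicities: for a partition $\xi$ with parts $\le m$ and $n\ge0$, $V^{\xi\to m}_n(1)$ is the number of level-$m$ Demazure modules $D(m,n)$ (over all grade shifts) in a Demazure flag of the $\mathfrak{sl}_2[t]$ fusion product $V(\xi)$; take as given the known formula: writing $n=n_1m+n_0$ with $0\le n_0<m$, $V^{\xi\to m}_n(1)=[x^{(|\xi|-n)/2}]\,p_{m-n_0-1}(x)p_\xi(x)/p_m(x)^{n_1+1}$ (zero if $(|\xi|-n)/2$ is not a nonnegative integer). Dyck paths: lattice paths from $(0,0)$ with steps $(1,1)$ (up) and $(1,-1)$ (down), ending on and never going below the $x$-axis; semilength = half the number of steps; height = maximal $y$-coordinate. For $0\le a,b\le m-1$ with $a+b\le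 m-1$ and $u\ge0$, $\mathcal D_m(a,b;u)$ is the set of Dyck paths of height $\le m-1$ and semilength $m-1-b+u$ whose first $a$ steps are up-steps and last $m-1-b$ steps are down-steps; $D_m(a,b;u)=\#\mathcal D_m(a,b;u)$. *)

theory Defs
  imports "HOL-Computational_Algebra.Computational_Algebra"
begin

fun pp :: "nat \<Rightarrow> rat poly" where
  "pp 0 = 1"
| "pp (Suc 0) = 1"
| "pp (Suc (Suc r)) = pp (Suc r) - [:0, 1:] * pp r"

definition Pf :: "nat \<Rightarrow> rat fps" where
  "Pf r = fps_of_poly (pp r)"

definition Pxi :: "nat list \<Rightarrow> rat fps" where
  "Pxi xi = prod_list (map Pf xi)"

definition Pminv :: "nat \<Rightarrow> int \<Rightarrow> rat fps" where
  "Pminv m q = (if q + 1 \<ge> 0 then inverse (Pf m) ^ nat (q + 1)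
               else Pf m ^ nat (- (q + 1)))"

text \<open>Numerical Demazure multiplicity V^{xi -> m}_n(1), via the given formula.\<close>
definition V :: "nat list \<Rightarrow> nat \<Rightarrow> nat \<Rightarrow> rat" where
  "V xi m n = (let n0 = n mod m; n1 = n div m; w = sum_list xi in
     if n \<le> w \<and> even (w - n)
     then fps_nth (Pf (m - n0 - 1) * Pxi xi * inverse (Pf m) ^ (n1 + 1)) ((w - n) div 2)
     else 0)"

text \<open>Lattice paths as lists of steps: True = up-step (1,1), False = down-step (1,-1).\<close>
definition level :: "bool list \<Rightarrow> int" where
  "level xs = sum_list (map (\<lambda>b. if b then 1 else -1) xs)"

definition is_dyck :: "bool list \<Rightarrow> bool" where
  "is_dyck xs \<longleftrightarrow> (\<forall>k \<le> length xs. level (take k xs) \<ge> 0) \<and> level xs = 0"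

definition height :: "bool list \<Rightarrow> int" where
  "height xs = Max {level (take k xs) | k. k \<le> length xs}"

definition Dset :: "nat \<Rightarrow> nat \<Rightarrow> nat \<Rightarrow> nat \<Rightarrow> bool list set" where
  "Dset m a b u = {P. is_dyck P \<and> height P \<le> int m - 1
       \<and> length P = 2 * (m - 1 - b + u)
       \<and> take a P = replicate a True
       \<and> drop (length P - (m - 1 - b)) P = replicate (m - 1 - b) False}"

definition Dnum :: "nat \<Rightarrow> nat \<Rightarrow> nat \<Rightarrow> nat \<Rightarrow> nat" where
  "Dnum m a b u = card (Dset m a b u)"

definition tuples :: "nat \<Rightarrow> (nat \<times> nat) list \<Rightarrow> nat \<Rightarrow> bool list list set" where
  "tuples m ab N = {Ps. length Ps = length ab \<and>
      (\<exists>us. length us = length ab \<and> sum_list us = N \<and>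
         (\<forall>i < length ab. Ps ! i \<in> Dset m (fst (ab ! i)) (snd (ab ! i)) (us ! i)))}"

end

theory Submission
  imports Defs
begin


lemma Pf0[simp]: "Pf 0 = 1" by (simp add: Pf_def)
lemma Pf1[simp]: "Pf (Suc 0) = 1" by (simp add: Pf_def)
lemma PfSS: "Pf (Suc (Suc r)) = Pf (Suc r) - fps_X * Pf r"
  by (simp add: Pf_def fps_of_poly_diff fps_of_poly_mult)

lemma Pf_nth0[simp]: "Pf r $ 0 = 1"
proof (induction r rule: pp.induct)
  case (3 r) then show ?case by (simp add: PfSS)
qed auto

lemma Pf_add: "Pf (a + b + 2) = Pf (a+1) * Pf (b+1) - fps_X * Pf a * Pf b"
proof (induction b rule: less_induct)
  case (less b)
  show ?case
  proof (cases b)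
    case 0 then show ?thesis using PfSS[of a] by simp
  next
    case (Suc b1) note b1 = this
    show ?thesis
    proof (cases b1)
      case 0
      have e: "Pf (a + b + 2) = Pf (a+1) - fps_X * Pf a - fps_X * Pf (a+1)"
        using PfSS[of "Suc a"] PfSS[of a] b1 0 by (simp add: numeral_2_eq_2)
      have e2: "Pf (b+1) = 1 - fps_X" using PfSS[of 0] b1 0 by simp
      show ?thesis unfolding e e2 using b1 0 by (simp add: algebra_simps)
    next
      case (Suc b2)
      have i1: "Pf (a + b1 + 2) = Pf (a+1) * Pf (b1+1) - fps_X * Pf a * Pf b1" using less b1 by simp
      have i2: "Pf (a + b2 + 2) = Pf (a+1) * Pf (b2+1) - fps_X * Pf a * Pf b2" using less b1 Suc by simp
      have e: "Pf (a + b + 2) = Pf (a + b1 + 2) - fps_X * Pf (a + b2 + 2)"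
        using PfSS[of "a + b2 + 2"] b1 Suc by (simp add: numeral_2_eq_2)
      have e1: "Pf (b+1) = Pf (b1+1) - fps_X * Pf (b2 + 1)" using PfSS[of "b2+1"] b1 Suc by simp
      have e2: "Pf b = Pf b1 - fps_X * Pf b2" using PfSS[of "b2"] b1 Suc by simp
      show ?thesis unfolding e i1 i2 e1 e2 by (simp add: algebra_simps)
    qed
  qed
qed

lemma deg_pp: "2 * degree (pp r) \<le> r"
proof (induction r rule: pp.induct)
  case (3 r)
  have "degree (pp (Suc (Suc r))) \<le> max (degree (pp (Suc r))) (degree ([:0,1:] * pp r))"
    by (metis degree_diff_le_max pp.simps(3))
  moreover have "degree ([:0,1::rat:] * pp r) \<le> 1 + degree (pp r)"
    using degree_mult_le[of "[:0,1::rat:]" "pp r"] by simp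
  ultimately show ?case using 3 by linarith
qed auto

definition Fn :: "nat \<Rightarrow> nat \<Rightarrow> nat \<Rightarrow> rat fps" where
  "Fn h c i = (if i \<le> c then Pf i * Pf (h-c) else fps_X^(i-c) * Pf c * Pf (h-i))"

lemma Pf_rec': "Pf (Suc j) = Pf (Suc (Suc j)) + fps_X * Pf j"
  using PfSS[of j] by simp

lemma Fn_rec:
  assumes "i \<le> h" "c \<le> h"
  shows "Fn h c i = (if i = c then Pf (Suc h) else 0) + (if i < h then Fn h c (Suc i) else 0)
           + (if 0 < i then fps_X * Fn h c (i-1) else 0)"
proof -
  consider "i < c" | "i = c" | "c < i" by linarith
  then show ?thesis
  proof cases
    case 1
    then show ?thesis
    proof (cases i)
      case 0 then show ?thesis using 1 assms by (simp add: Fn_def)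
    next
      case (Suc j)
      then show ?thesis using 1 assms Pf_rec'[of j] by (simp add: Fn_def algebra_simps)
    qed
  next
    case 2
    show ?thesis
    proof (cases c)
      case 0
      show ?thesis
      proof (cases h)
        case 0 then show ?thesis using 2 \<open>c = 0\<close> by (simp add: Fn_def)
      next
        case (Suc h1) then show ?thesis using 2 \<open>c = 0\<close> Pf_rec'[of h1] by (simp add: Fn_def)
      qed
    next
      case (Suc c1)
      show ?thesis
      proof (cases "c < h")
        case False
        then have "h = c" using assms by simp
        then show ?thesis using 2 Suc Pf_rec'[of c1] by (simp add: Fn_def)
      next
        case True
        then obtain k1 where k1: "h - c = Suc k1" by (metis Suc_diff_Suc)
        have hh: "h = c1 + k1 + 2" using k1 Suc True by simp
        have ad: "Pf (Suc h) = Pf (c1+1) * Pf (k1+2) - fps_X * Pf c1 * Pf (k1+1)"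
          using Pf_add[of c1 "k1+1"] hh by (simp add: add.commute add.left_commute)
        have r: "Pf (k1+2) = Pf (k1+1) - fps_X * Pf k1" using PfSS[of k1] by simp
        have e1: "h - Suc c = k1" using k1 by simp
        have e2: "Suc c - c = 1" by simp
        have e3: "h - Suc c1 = Suc k1" "h - Suc (Suc c1) = k1" using k1 Suc by auto
        show ?thesis using 2 Suc True unfolding Fn_def
          apply (simp add: e3)
          unfolding ad r by (simp add: algebra_simps)
      qed
    qed
  next
    case 3
    then obtain e where e: "i - c = Suc e" by (metis Suc_diff_Suc)
    have fi1: "fps_X * Fn h c (i-1) = fps_X ^ (i - c) * Pf c * Pf (Suc (h - i))"
    proof (cases "i - 1 = c")
      case True
      then have "i = Suc c" "h - c = Suc (h - i)" using 3 assms by auto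
      then show ?thesis using True by (simp add: Fn_def)
    next
      case False
      then have "\<not> i - 1 \<le> c" using 3 by simp
      moreover have "i - 1 - c = e" "h - (i - 1) = Suc (h - i)" using e 3 assms by auto
      ultimately show ?thesis using e by (simp add: Fn_def)
    qed
    show ?thesis
    proof (cases "i < h")
      case True
      then obtain j where j: "h - i = Suc j" by (metis Suc_diff_Suc)
      have "h - Suc i = j" "Suc i - c = Suc (i - c)" using j 3 by auto
      then show ?thesis using 3 True j fi1 Pf_rec'[of j] unfolding Fn_def
        by (simp add: algebra_simps)
    next
      case False
      then have "h = i" using assms by simp
      then show ?thesis using 3 fi1 by (simp add: Fn_def)
    qed
  qed
qed

definition Ef :: "nat \<Rightarrow> nat \<Rightarrow> nat \<Rightarrow> rat fps" where
  "Ef h c i = Fn h c i * inverse (Pf (Suc h))"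

lemma Ef_nth:
  assumes "i \<le> h" "c \<le> h"
  shows "Ef h c i $ n = (if i = c \<and> n = 0 then 1 else 0) + (if i < h then Ef h c (Suc i) $ n else 0)
           + (if 0 < i \<and> 0 < n then Ef h c (i-1) $ (n-1) else 0)"
proof -
  have inv: "Pf (Suc h) * inverse (Pf (Suc h)) = 1" by (rule inverse_mult_eq_1') simp
  have "Ef h c i = (if i = c then 1 else 0) + (if i < h then Ef h c (Suc i) else 0)
           + (if 0 < i then fps_X * Ef h c (i-1) else 0)"
    unfolding Ef_def by (subst Fn_rec[OF assms]) (simp add: algebra_simps inv)
  then show ?thesis by (cases n) auto
qed

lemma level_Nil[simp]: "level [] = 0" by (simp add: level_def)
lemma level_Cons[simp]: "level (b # w) = (if b then 1 else -1) + level w" by (simp add: level_def)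
lemma level_append[simp]: "level (u @ v) = level u + level v" by (simp add: level_def)
lemma level_rep_T[simp]: "level (replicate a True) = int a" by (induction a) auto
lemma level_rep_F[simp]: "level (replicate a False) = - int a" by (induction a) auto
lemma level_len: "level w + 2 * int (length (filter Not w)) = int (length w)"
  by (induction w) auto

fun okw :: "int \<Rightarrow> int \<Rightarrow> bool list \<Rightarrow> bool" where
  "okw h i [] = True"
| "okw h i (b # w) = (0 \<le> i + (if b then 1 else -1) \<and> i + (if b then 1 else -1) \<le> h
      \<and> okw h (i + (if b then 1 else -1)) w)"

lemma okw_append: "okw h i (u @ v) = (okw h i u \<and> okw h (i + level u) v)"
  by (induction u arbitrary: i) (auto simp: algebra_simps)

lemma okw_rep_T: "0 \<le> i \<Longrightarrow> i + int a \<le> h \<Longrightarrow> okw h i (replicate a True)"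
  by (induction a arbitrary: i) auto

lemma okw_rep_F: "0 \<le> i - int a \<Longrightarrow> i \<le> h \<Longrightarrow> okw h i (replicate a False)"
  by (induction a arbitrary: i) auto

definition Wset :: "nat \<Rightarrow> nat \<Rightarrow> nat \<Rightarrow> nat \<Rightarrow> bool list set" where
  "Wset h i c n = {w. okw (int h) (int i) w \<and> int i + level w = int c \<and> length (filter Not w) = n}"

lemma Wset_finite: "finite (Wset h i c n)"
proof -
  have "Wset h i c n \<subseteq> {w. set w \<subseteq> UNIV \<and> length w \<le> c + 2 * n}"
  proof
    fix w assume "w \<in> Wset h i c n"
    then have "int i + level w = int c" "length (filter Not w) = n" by (auto simp: Wset_def)
    then show "w \<in> {w. set w \<subseteq> UNIV \<and> length w \<le> c + 2 * n}" using level_len[of w] by auto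
  qed
  moreover have "finite {w::bool list. set w \<subseteq> UNIV \<and> length w \<le> c + 2 * n}"
    by (rule finite_lists_length_le) simp
  ultimately show ?thesis by (rule finite_subset)
qed

lemma Wset_rec:
  assumes "i \<le> h"
  shows "Wset h i c n = (if i = c \<and> n = 0 then {[]} else {})
     \<union> (if i < h then (#) True ` Wset h (Suc i) c n else {})
     \<union> (if 0 < i \<and> 0 < n then (#) False ` Wset h (i-1) c (n-1) else {})"
proof (intro set_eqI iffI)
  fix w assume w: "w \<in> Wset h i c n"
  show "w \<in> (if i = c \<and> n = 0 then {[]} else {})
     \<union> (if i < h then (#) True ` Wset h (Suc i) c n else {})
     \<union> (if 0 < i \<and> 0 < n then (#) False ` Wset h (i-1) c (n-1) else {})"
  proof (cases w)
    case Nil then show ?thesis using w by (auto simp: Wset_def)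
  next
    case (Cons b v)
    show ?thesis
    proof (cases b)
      case True
      then have "i < h" "v \<in> Wset h (Suc i) c n" using w Cons by (auto simp: Wset_def algebra_simps)
      then show ?thesis using Cons True by auto
    next
      case False
      then have "0 < i" "0 < n" "v \<in> Wset h (i-1) c (n-1)" using w Cons by (auto simp: Wset_def algebra_simps of_nat_diff)
      then show ?thesis using Cons False by auto
    qed
  qed
next
  fix w assume "w \<in> (if i = c \<and> n = 0 then {[]} else {})
     \<union> (if i < h then (#) True ` Wset h (Suc i) c n else {})
     \<union> (if 0 < i \<and> 0 < n then (#) False ` Wset h (i-1) c (n-1) else {})"
  then show "w \<in> Wset h i c n" using assms
    by (auto simp: Wset_def algebra_simps of_nat_diff split: if_splits)
qed

lemma Wset_card:
  assumes "i \<le> h"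
  shows "card (Wset h i c n) = (if i = c \<and> n = 0 then 1 else 0)
     + (if i < h then card (Wset h (Suc i) c n) else 0)
     + (if 0 < i \<and> 0 < n then card (Wset h (i-1) c (n-1)) else 0)"
proof -
  let ?A = "(if i = c \<and> n = 0 then {[]} else {}) :: bool list set"
  let ?B = "(if i < h then (#) True ` Wset h (Suc i) c n else {})"
  let ?C = "(if 0 < i \<and> 0 < n then (#) False ` Wset h (i-1) c (n-1) else {})"
  have fA: "finite ?A" and fB: "finite ?B" and fC: "finite ?C" by (auto simp: Wset_finite)
  have d1: "(?A \<union> ?B) \<inter> ?C = {}" and d2: "?A \<inter> ?B = {}" by auto
  have "card (Wset h i c n) = card (?A \<union> ?B) + card ?C"
    unfolding Wset_rec[OF assms] by (rule card_Un_disjoint) (use fA fB fC d1 in auto)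
  also have "card (?A \<union> ?B) = card ?A + card ?B" by (rule card_Un_disjoint) (use fA fB d2 in auto)
  also have "card ?B = (if i < h then card (Wset h (Suc i) c n) else 0)"
    by (auto simp: card_image)
  also have "card ?C = (if 0 < i \<and> 0 < n then card (Wset h (i-1) c (n-1)) else 0)"
    by (auto simp: card_image)
  finally show ?thesis by simp
qed

lemma Wset_count:
  assumes "i \<le> h" "c \<le> h"
  shows "of_nat (card (Wset h i c n)) = Ef h c i $ n"
  using assms(1)
proof (induction n arbitrary: i rule: less_induct)
  case (less n)
  have "\<forall>i. i \<le> h \<longrightarrow> h - i = d \<longrightarrow> of_nat (card (Wset h i c n)) = Ef h c i $ n" for d
  proof (induction d)
    case 0
    show ?case
    proof (intro allI impI)
      fix i assume i: "i \<le> h" "h - i = 0"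
      then have "i = h" by simp
      show "of_nat (card (Wset h i c n)) = Ef h c i $ n"
        unfolding Wset_card[OF i(1)] Ef_nth[OF i(1) assms(2)]
        using i less.IH[of "n-1" "i-1"] by simp
    qed
  next
    case (Suc d)
    show ?case
    proof (intro allI impI)
      fix i assume i: "i \<le> h" "h - i = Suc d"
      then have "i < h" "Suc i \<le> h" "h - Suc i = d" by auto
      then show "of_nat (card (Wset h i c n)) = Ef h c i $ n"
        unfolding Wset_card[OF i(1)] Ef_nth[OF i(1) assms(2)]
        using i less.IH[of "n-1" "i-1"] Suc.IH by simp
    qed
  qed
  then show ?case using less.prems by blast
qed

lemma all_le_Suc: "(\<forall>k\<le>Suc n. P k) = (P 0 \<and> (\<forall>k\<le>n. P (Suc k)))"
  by (metis Suc_le_mono not0_implies_Suc zero_le)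

lemma okw_prefix:
  "0 \<le> i \<Longrightarrow> i \<le> h \<Longrightarrow>
   okw h i w = (\<forall>k \<le> length w. 0 \<le> i + level (take k w) \<and> i + level (take k w) \<le> h)"
proof (induction w arbitrary: i)
  case Nil then show ?case by simp
next
  case (Cons b w)
  show ?case
  proof (cases "0 \<le> i + (if b then 1 else -1) \<and> i + (if b then 1 else -1) \<le> h")
    case True
    then show ?thesis using Cons.IH[of "i + (if b then 1 else -1)"] Cons.prems
      by (simp only: length_Cons all_le_Suc) (simp add: algebra_simps)
  next
    case False
    then show ?thesis using Cons.prems
      apply (simp only: length_Cons all_le_Suc okw.simps)
      apply (rule iffI, simp)
      apply (erule conjE)
      apply (drule spec[of _ 0])
      by auto
  qed
qed

lemma dyck_iff:
  assumes "0 \<le> h"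
  shows "(is_dyck P \<and> height P \<le> h) = (okw h 0 P \<and> level P = 0)"
proof -
  have e: "{level (take k P) | k. k \<le> length P} = (\<lambda>k. level (take k P)) ` {..length P}" by auto
  have "height P \<le> h \<longleftrightarrow> (\<forall>k \<le> length P. level (take k P) \<le> h)"
    unfolding height_def e by (subst Max_le_iff) auto
  then show ?thesis unfolding is_dyck_def using okw_prefix[of 0 h P] assms by auto
qed

lemma Dset_image:
  assumes m: "1 \<le> m" and ab: "a + b \<le> m - 1"
  shows "Dset m a b u = (\<lambda>w. replicate a True @ w @ replicate (m-1-b) False) ` Wset (m-1) a (m-1-b) u"
proof (intro set_eqI iffI)
  fix P assume P: "P \<in> Dset m a b u"
  define c where "c = m - 1 - b"
  define L where "L = length P"
  have L: "L = 2 * (c + u)" using P by (simp add: Dset_def L_def c_def)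
  have ac: "a \<le> c" using ab by (simp add: c_def)
  have tk: "take a P = replicate a True" and dr: "drop (L - c) P = replicate c False"
    using P by (auto simp: Dset_def L_def c_def)
  have dy: "okw (int (m-1)) 0 P" "level P = 0"
    using P dyck_iff[of "int (m-1)" P] m by (auto simp: Dset_def)
  define w where "w = take (L - a - c) (drop a P)"
  have "drop (L - a - c) (drop a P) = drop (L - c) P" using ac L by (simp add: drop_drop)
  then have Pe: "P = replicate a True @ w @ replicate c False"
    unfolding w_def by (metis append_take_drop_id dr tk)
  have ok: "okw (int (m-1)) (int a) w" using dy(1) Pe by (simp add: okw_append)
  have lv: "int a + level w = int c" using dy(2) Pe by simp
  have dn: "length (filter Not w) = u"
    using level_len[of P] L dy(2) Pe unfolding L_def by (simp add: filter_replicate)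
  show "P \<in> (\<lambda>w. replicate a True @ w @ replicate (m-1-b) False) ` Wset (m-1) a (m-1-b) u"
    using ok lv dn Pe by (auto simp: Wset_def c_def)
next
  fix P assume "P \<in> (\<lambda>w. replicate a True @ w @ replicate (m-1-b) False) ` Wset (m-1) a (m-1-b) u"
  then obtain w where w: "w \<in> Wset (m-1) a (m-1-b) u" and Pe: "P = replicate a True @ w @ replicate (m-1-b) False"
    by auto
  define c where "c = m - 1 - b"
  have ac: "a \<le> c" "c \<le> m - 1" using ab by (auto simp: c_def)
  have ok: "okw (int (m-1)) (int a) w" and lv: "int a + level w = int c" and dn: "length (filter Not w) = u"
    using w by (auto simp: Wset_def c_def)
  have len: "int (length w) = int c - int a + 2 * int u" using level_len[of w] lv dn by simp
  have okP: "okw (int (m-1)) 0 P"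
    using Pe ok lv ac unfolding c_def[symmetric]
    by (simp add: okw_append okw_rep_T okw_rep_F)
  have lP: "level P = 0" using Pe lv c_def by simp
  have lenP: "length P = 2 * (m - 1 - b + u)" using Pe len ac unfolding c_def[symmetric] by simp
  have "is_dyck P \<and> height P \<le> int m - 1" using dyck_iff[of "int (m-1)" P] okP lP m by (simp add: of_nat_diff)
  moreover have "take a P = replicate a True" using Pe by simp
  moreover have "drop (length P - (m - 1 - b)) P = replicate (m - 1 - b) False"
  proof -
    have "length P - (m - 1 - b) = length (replicate a True @ w)" using Pe by simp
    then show ?thesis using Pe by (metis append_assoc append_eq_conv_conj)
  qed
  ultimately show "P \<in> Dset m a b u" using lenP by (simp add: Dset_def)
qed

definition Gf :: "nat \<Rightarrow> nat \<Rightarrow> nat \<Rightarrow> rat fps" where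
  "Gf m a b = Abs_fps (\<lambda>u. of_nat (card (Dset m a b u)))"

lemma Dset_card:
  assumes "1 \<le> m" "a + b \<le> m - 1"
  shows "card (Dset m a b u) = card (Wset (m-1) a (m-1-b) u)"
  unfolding Dset_image[OF assms] by (rule card_image) (auto simp: inj_on_def)

lemma Gf_eq:
  assumes "1 \<le> m" "a + b \<le> m - 1"
  shows "Gf m a b = Pf a * Pf b * inverse (Pf m)"
proof (rule fps_ext)
  fix u
  have "Gf m a b $ u = Ef (m-1) (m-1-b) a $ u"
    unfolding Gf_def using Dset_card[OF assms, of u] Wset_count[of a "m-1" "m-1-b" u] assms by simp
  also have "Ef (m-1) (m-1-b) a = Pf a * Pf b * inverse (Pf m)"
  proof -
    have "a \<le> m-1-b" "m-1-(m-1-b) = b" "Suc (m-1) = m" using assms by auto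
    then show ?thesis by (simp add: Ef_def Fn_def)
  qed
  finally show "Gf m a b $ u = (Pf a * Pf b * inverse (Pf m)) $ u" .
qed

lemma Dset_finite: "finite (Dset m a b u)"
proof -
  have "Dset m a b u \<subseteq> {w. set w \<subseteq> UNIV \<and> length w \<le> 2 * (m - 1 - b + u)}"
    by (auto simp: Dset_def)
  moreover have "finite {w::bool list. set w \<subseteq> UNIV \<and> length w \<le> 2 * (m - 1 - b + u)}"
    by (rule finite_lists_length_le) simp
  ultimately show ?thesis by (rule finite_subset)
qed

lemma tuples_Nil: "tuples m [] N = (if N = 0 then {[]} else {})"
  by (auto simp: tuples_def)

lemma all_less_Suc: "(\<forall>i<Suc n. P i) = (P 0 \<and> (\<forall>i<n. P (Suc i)))"
  by (metis less_Suc_eq_0_disj Suc_less_eq zero_less_Suc)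

lemma tuples_Cons:
  "tuples m (ab # abl) N =
     (\<Union>u\<in>{..N}. (\<lambda>(P, Ps). P # Ps) ` (Dset m (fst ab) (snd ab) u \<times> tuples m abl (N - u)))"
proof (intro set_eqI iffI)
  fix Ps assume "Ps \<in> tuples m (ab # abl) N"
  then obtain us where l: "length Ps = Suc (length abl)" and us: "length us = Suc (length abl)" "sum_list us = N"
    and all: "\<forall>i < Suc (length abl). Ps ! i \<in> Dset m (fst ((ab#abl) ! i)) (snd ((ab#abl) ! i)) (us ! i)"
    by (auto simp: tuples_def)
  obtain P Ps' where Ps: "Ps = P # Ps'" using l by (cases Ps) auto
  obtain u us' where uu: "us = u # us'" using us by (cases us) auto
  have "P \<in> Dset m (fst ab) (snd ab) u" "\<forall>i < length abl. Ps' ! i \<in> Dset m (fst (abl ! i)) (snd (abl ! i)) (us' ! i)"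
    using all unfolding all_less_Suc Ps uu by auto
  moreover have "length Ps' = length abl" "length us' = length abl" "sum_list us' = N - u" "u \<le> N"
    using l us Ps uu by auto
  ultimately have P: "P \<in> Dset m (fst ab) (snd ab) u" and T: "Ps' \<in> tuples m abl (N - u)" and "u \<le> N"
    unfolding tuples_def by (blast, (intro CollectI conjI exI[of _ us']; simp), simp)
  then show "Ps \<in> (\<Union>u\<in>{..N}. (\<lambda>(P, Ps). P # Ps) ` (Dset m (fst ab) (snd ab) u \<times> tuples m abl (N - u)))"
    unfolding Ps by (intro UN_I[of u] image_eqI[of _ _ "(P, Ps')"]) auto
next
  fix Ps assume "Ps \<in> (\<Union>u\<in>{..N}. (\<lambda>(P, Ps). P # Ps) ` (Dset m (fst ab) (snd ab) u \<times> tuples m abl (N - u)))"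
  then obtain u P Ps' where u: "u \<le> N" and Ps: "Ps = P # Ps'" and P: "P \<in> Dset m (fst ab) (snd ab) u"
    and Ps': "Ps' \<in> tuples m abl (N - u)" by auto
  then obtain us' where us': "length us' = length abl" "sum_list us' = N - u" "length Ps' = length abl"
     "\<forall>i < length abl. Ps' ! i \<in> Dset m (fst (abl ! i)) (snd (abl ! i)) (us' ! i)"
    by (auto simp: tuples_def)
  have "length (u # us') = length (ab # abl) \<and> sum_list (u # us') = N \<and>
     (\<forall>i < length (ab # abl). Ps ! i \<in> Dset m (fst ((ab#abl) ! i)) (snd ((ab#abl) ! i)) ((u # us') ! i))"
    using us' u P unfolding Ps length_Cons all_less_Suc by simp
  then show "Ps \<in> tuples m (ab # abl) N" unfolding tuples_def using us' Ps
    by (intro CollectI conjI exI[of _ "u # us'"]) auto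
qed

lemma Dset_len: "P \<in> Dset m a b u \<Longrightarrow> length P = 2 * (m - 1 - b + u)"
  by (simp add: Dset_def)

lemma tuples_card:
  "finite (tuples m ab N) \<and> of_nat (card (tuples m ab N)) = prod_list (map (\<lambda>(a,b). Gf m a b) ab) $ N"
proof (induction ab arbitrary: N)
  case Nil then show ?case by (simp add: tuples_Nil)
next
  case (Cons ab abl)
  obtain a b where abe: "ab = (a, b)" by force
  let ?A = "\<lambda>u. (\<lambda>(P, Ps). P # Ps) ` (Dset m a b u \<times> tuples m abl (N - u))"
  have fin: "finite (?A u)" for u using Cons.IH Dset_finite by auto
  have disj: "?A u \<inter> ?A v = {}" if "u \<noteq> v" for u v
  proof (rule equals0I)
    fix x assume "x \<in> ?A u \<inter> ?A v"
    then obtain P Ps P' Ps' where "x = P # Ps" "P \<in> Dset m a b u" "x = P' # Ps'" "P' \<in> Dset m a b v"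
      by (auto simp: image_iff)
    then have "length P = 2 * (m - 1 - b + u)" "length P = 2 * (m - 1 - b + v)" by (auto dest: Dset_len)
    then show False using that by simp
  qed
  have cA: "card (?A u) = card (Dset m a b u) * card (tuples m abl (N - u))" for u
    by (subst card_image) (auto simp: inj_on_def card_cartesian_product)
  have "card (tuples m (ab # abl) N) = (\<Sum>u\<in>{..N}. card (?A u))"
    unfolding tuples_Cons abe fst_conv snd_conv
    by (rule card_UN_disjoint) (use fin disj in auto)
  then have "of_nat (card (tuples m (ab # abl) N)) =
       (\<Sum>u\<in>{0..N}. Gf m a b $ u * prod_list (map (\<lambda>(a,b). Gf m a b) abl) $ (N - u))"
    using Cons.IH by (simp add: cA Gf_def atLeast0AtMost)
  moreover have "finite (tuples m (ab # abl) N)" unfolding tuples_Cons using fin abe by auto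
  ultimately show ?case by (simp add: abe fps_mult_nth)
qed



lemma deg_prod_pp: "2 * degree (prod_list (map pp rs)) \<le> sum_list rs"
proof (induction rs)
  case (Cons r rs)
  have d: "degree (pp r * prod_list (map pp rs)) \<le> degree (pp r) + degree (prod_list (map pp rs))"
    by (rule degree_mult_le)
  have "2 * degree (pp r * prod_list (map pp rs)) \<le> r + sum_list rs"
    using d Cons.IH deg_pp[of r] by linarith
  then show ?case by (simp only: list.map prod_list.Cons sum_list.Cons)
qed simp

lemma deg_pow_pp: "2 * degree (pp m ^ k) \<le> k * m"
proof -
  have "degree (pp m ^ k) \<le> degree (pp m) * k" by (rule degree_power_le)
  then have "2 * degree (pp m ^ k) \<le> (2 * degree (pp m)) * k" by (simp only: mult.assoc)
  also have "\<dots> \<le> m * k" using deg_pp[of m] by (rule mult_le_mono1)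
  finally show ?thesis by (simp only: mult.commute)
qed

lemma Pminv_neg: "q < 0 \<Longrightarrow> Pminv m q = Pf m ^ nat (- (q + 1))"
  by (simp add: Pminv_def)

lemma zero_case:
  assumes m: "1 \<le> m" and q: "q < 0" and rho: "\<rho> < m"
    and rel: "2 * int N = int (sum_list rs) + int s - q * int m - int \<rho>"
  shows "(Pf (m - \<rho> - 1) * prod_list (map Pf rs) * Pminv m q) $ N = 0"
proof -
  define k where "k = nat (- (q + 1))"
  have qk: "q = - int k - 1" using q k_def by simp
  define p where "p = pp (m - \<rho> - 1) * prod_list (map pp rs) * pp m ^ k"
  have e: "Pf (m - \<rho> - 1) * prod_list (map Pf rs) * Pminv m q = fps_of_poly p"
    unfolding p_def Pminv_neg[OF q] k_def[symmetric] Pf_def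
    by (simp add: fps_of_poly_mult fps_of_poly_prod_list fps_of_poly_power o_def)
  have "degree p \<le> degree (pp (m - \<rho> - 1)) + degree (prod_list (map pp rs)) + degree (pp m ^ k)"
    unfolding p_def by (meson add_le_mono degree_mult_le le_trans order_refl)
  then have "2 * degree p \<le> (m - \<rho> - 1) + sum_list rs + k * m"
    using deg_pp[of "m - \<rho> - 1"] deg_prod_pp[of rs] deg_pow_pp[of m k] by linarith
  moreover have "2 * int N = int (sum_list rs) + int s + (int k + 1) * int m - int \<rho>"
    using rel qk by (simp add: algebra_simps)
  moreover have "int (m - \<rho> - 1) = int m - int \<rho> - 1" using rho by simp
  ultimately have "2 * int (degree p) < 2 * int N"
  proof -
    assume a1: "2 * degree p \<le> (m - \<rho> - 1) + sum_list rs + k * m"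
      and a2: "2 * int N = int (sum_list rs) + int s + (int k + 1) * int m - int \<rho>"
      and a3: "int (m - \<rho> - 1) = int m - int \<rho> - 1"
    have "int (2 * degree p) \<le> int ((m - \<rho> - 1) + sum_list rs + k * m)" using a1 by (rule of_nat_mono)
    then have "2 * int (degree p) \<le> int (m - \<rho> - 1) + int (sum_list rs) + int k * int m" by simp
    then show ?thesis using a2 a3 by (simp add: algebra_simps)
  qed
  then have "degree p < N" by simp
  then show ?thesis using e by (simp add: coeff_eq_0)
qed

lemma Pxi_form: "Pxi (replicate t m @ rs @ replicate s 1) = Pf m ^ t * prod_list (map Pf rs)"
  by (simp add: Pxi_def prod_list_replicate)

lemma Pminv_key:
  assumes "0 \<le> int t + q"
  shows "Pf m ^ t * inverse (Pf m) ^ (nat (int t + q) + 1) = Pminv m q"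
proof -
  have inv: "Pf m * inverse (Pf m) = 1" by (rule inverse_mult_eq_1') simp
  show ?thesis
  proof (cases "q + 1 \<ge> 0")
    case True
    then have "nat (int t + q) + 1 = t + nat (q + 1)" using assms by simp
    then have "Pf m ^ t * inverse (Pf m) ^ (nat (int t + q) + 1)
       = (Pf m * inverse (Pf m)) ^ t * inverse (Pf m) ^ nat (q + 1)"
      by (simp add: power_add power_mult_distrib)
    then show ?thesis using True by (simp add: inv Pminv_def)
  next
    case False
    define K where "K = nat (int t + q) + 1"
    define J where "J = nat (- (q + 1))"
    have "t = K + J" using assms False unfolding K_def J_def by simp
    then have "Pf m ^ t = Pf m ^ K * Pf m ^ J" by (simp add: power_add)
    then have "Pf m ^ t * inverse (Pf m) ^ K = (Pf m ^ K * inverse (Pf m) ^ K) * Pf m ^ J"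
      by (simp only: ac_simps)
    also have "\<dots> = (Pf m * inverse (Pf m)) ^ K * Pf m ^ J" by (simp only: power_mult_distrib)
    finally have "Pf m ^ t * inverse (Pf m) ^ (nat (int t + q) + 1)
       = (Pf m * inverse (Pf m)) ^ (nat (int t + q) + 1) * Pf m ^ nat (- (q + 1))"
      unfolding K_def J_def .
    then show ?thesis using False by (simp add: inv Pminv_def)
  qed
qed

lemma V_formula:
  assumes m: "1 \<le> m" and n: "0 \<le> int (t*m + sum_list rs + s) - 2 * int N"
  shows "V (replicate t m @ rs @ replicate s 1) m (nat (int (t*m + sum_list rs + s) - 2 * int N))
   = (Pf (m - nat ((int (sum_list rs) + int s - 2*int N) mod int m) - 1) * prod_list (map Pf rs)
       * Pminv m ((int (sum_list rs) + int s - 2*int N) div int m)) $ N"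
proof -
  define R where "R = sum_list rs"
  define z where "z = int R + int s - 2 * int N"
  define q where "q = z div int m"
  define \<rho> where "\<rho> = nat (z mod int m)"
  define nn where "nn = nat (int (t*m+R+s) - 2 * int N)"
  have mpos: "0 < int m" using m by simp
  have zq: "z = q * int m + int \<rho>" using mpos unfolding q_def \<rho>_def
    by (simp add: mult.commute)
  have \<rho>m: "\<rho> < m" using mpos unfolding \<rho>_def
    using pos_mod_bound[OF mpos, of z] pos_mod_sign[OF mpos, of z] by (simp add: nat_less_iff)
  have nni: "int nn = (int t + q) * int m + int \<rho>" using n zq unfolding nn_def z_def R_def
    by (simp add: algebra_simps)
  have tq: "0 \<le> int t + q"
  proof (rule ccontr)
    assume "\<not> 0 \<le> int t + q"
    then have "(int t + q) * int m \<le> (-1) * int m" using mpos by (intro mult_right_mono) auto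
    then show False using nni \<rho>m by linarith
  qed
  have "int nn = int (nat (int t + q) * m + \<rho>)" using nni tq by simp
  then have nne: "nn = nat (int t + q) * m + \<rho>" by (simp only: of_nat_eq_iff)
  have dv: "nn div m = nat (int t + q)" and md: "nn mod m = \<rho>" using nne \<rho>m by auto
  have w: "sum_list (replicate t m @ rs @ replicate s 1) = t*m + R + s" by (simp add: R_def sum_list_replicate)
  have le: "nn \<le> t*m + R + s" and df: "t*m + R + s - nn = 2 * N"
  proof -
    have gen: "\<And>W::nat. 2 * int N \<le> int W \<Longrightarrow> nat (int W - 2 * int N) \<le> W \<and> W - nat (int W - 2 * int N) = 2 * N"
      by arith
    have "2 * int N \<le> int (t*m+R+s)" using n unfolding R_def by linarith
    from gen[OF this] show "nn \<le> t*m + R + s" "t*m + R + s - nn = 2 * N" unfolding nn_def by auto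
  qed
  have "V (replicate t m @ rs @ replicate s 1) m nn
     = (Pf (m - \<rho> - 1) * (Pf m ^ t * prod_list (map Pf rs)) * inverse (Pf m) ^ (nat (int t + q) + 1)) $ N"
    unfolding V_def Let_def w dv md Pxi_form using le df by simp
  also have "\<dots> = (Pf (m - \<rho> - 1) * prod_list (map Pf rs) * Pminv m q) $ N"
  proof -
    have "Pf (m - \<rho> - 1) * (Pf m ^ t * prod_list (map Pf rs)) * inverse (Pf m) ^ (nat (int t + q) + 1)
      = Pf (m - \<rho> - 1) * prod_list (map Pf rs) * (Pf m ^ t * inverse (Pf m) ^ (nat (int t + q) + 1))"
      by (simp only: ac_simps)
    then show ?thesis unfolding Pminv_key[OF tq] by (simp only:)
  qed
  finally show ?thesis unfolding nn_def q_def \<rho>_def z_def R_def .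
qed

lemma Gf_row: "\<forall>r\<in>set rs. r \<le> m - 1 \<Longrightarrow> 1 \<le> m \<Longrightarrow>
   prod_list (map (\<lambda>(a, b). Gf m a b) (map (\<lambda>r. (r, 0)) rs)) = prod_list (map Pf rs) * inverse (Pf m) ^ length rs"
proof (induction rs)
  case (Cons r rs)
  have "Gf m r 0 = Pf r * inverse (Pf m)" using Gf_eq[of m r 0] Cons.prems by simp
  then show ?case using Cons by (simp add: ac_simps)
qed simp

lemma tuples_main:
  assumes m: "1 \<le> m" and rs: "\<forall>r\<in>set rs. r \<le> m - 1" and q: "int (length rs) \<le> q" and rho: "\<rho> < m"
  shows "of_nat (card (tuples m ((0, m - \<rho> - 1) # map (\<lambda>r. (r, 0)) rs @ replicate (nat q - length rs) (0, 0)) N))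
     = (Pf (m - \<rho> - 1) * prod_list (map Pf rs) * Pminv m q) $ N"
proof -
  have g0: "Gf m 0 (m - \<rho> - 1) = Pf (m - \<rho> - 1) * inverse (Pf m)" using Gf_eq[of m 0 "m - \<rho> - 1"] m by simp
  have g00: "Gf m 0 0 = inverse (Pf m)" using Gf_eq[of m 0 0] m by simp
  have pr: "prod_list (map (\<lambda>(a, b). Gf m a b) (replicate k (0, 0))) = inverse (Pf m) ^ k" for k
    using g00 by (simp add: prod_list_replicate)
  have e: "nat (q + 1) = 1 + length rs + (nat q - length rs)" using q by arith
  have pm: "Pminv m q = inverse (Pf m) ^ (1 + length rs + (nat q - length rs))"
    using q unfolding Pminv_def e[symmetric] by simp
  have "prod_list (map (\<lambda>(a, b). Gf m a b) ((0, m - \<rho> - 1) # map (\<lambda>r. (r, 0)) rs @ replicate (nat q - length rs) (0, 0)))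
     = Gf m 0 (m - \<rho> - 1) * (prod_list (map (\<lambda>(a, b). Gf m a b) (map (\<lambda>r. (r, 0)) rs))
        * prod_list (map (\<lambda>(a, b). Gf m a b) (replicate (nat q - length rs) (0, 0))))"
    by (simp only: list.map map_append prod_list.Cons prod_list.append prod.case)
  also have "\<dots> = Pf (m - \<rho> - 1) * inverse (Pf m) * (prod_list (map Pf rs) * inverse (Pf m) ^ length rs
       * inverse (Pf m) ^ (nat q - length rs))"
    by (simp only: g0 pr Gf_row[OF rs m])
  also have "\<dots> = Pf (m - \<rho> - 1) * prod_list (map Pf rs) * Pminv m q"
    unfolding pm by (simp add: power_add ac_simps)
  finally show ?thesis
    using tuples_card[of m "(0, m - \<rho> - 1) # map (\<lambda>r. (r, 0)) rs @ replicate (nat q - length rs) (0, 0)" N]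
    by simp
qed

lemma gen:
  assumes m: "1 \<le> m" and rs: "\<forall>r\<in>set rs. r \<le> m - 1"
    and n: "0 \<le> int (t*m + sum_list rs + s) - 2 * int N"
  shows "V (replicate t m @ rs @ replicate s 1) m (nat (int (t*m + sum_list rs + s) - 2 * int N))
   = (Pf (m - nat ((int (sum_list rs) + int s - 2*int N) mod int m) - 1) * prod_list (map Pf rs)
       * Pminv m ((int (sum_list rs) + int s - 2*int N) div int m)) $ N"
   and "(int (sum_list rs) + int s - 2*int N) div int m < 0 \<Longrightarrow>
      V (replicate t m @ rs @ replicate s 1) m (nat (int (t*m + sum_list rs + s) - 2 * int N)) = 0"
   and "(int (sum_list rs) + int s - 2*int N) div int m \<ge> int (length rs) \<Longrightarrow>
      V (replicate t m @ rs @ replicate s 1) m (nat (int (t*m + sum_list rs + s) - 2 * int N))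
      = of_nat (card (tuples m ((0, m - nat ((int (sum_list rs) + int s - 2*int N) mod int m) - 1)
          # map (\<lambda>r. (r, 0)) rs @ replicate (nat ((int (sum_list rs) + int s - 2*int N) div int m) - length rs) (0, 0)) N))"
proof -
  define z where "z = int (sum_list rs) + int s - 2 * int N"
  have mpos: "0 < int m" using m by simp
  have rho: "nat (z mod int m) < m"
    using pos_mod_bound[OF mpos, of z] pos_mod_sign[OF mpos, of z] by (simp add: nat_less_iff)
  have zq: "z = z div int m * int m + int (nat (z mod int m))" using mpos by simp
  note V1 = V_formula[OF m n]
  show "V (replicate t m @ rs @ replicate s 1) m (nat (int (t*m + sum_list rs + s) - 2 * int N))
   = (Pf (m - nat ((int (sum_list rs) + int s - 2*int N) mod int m) - 1) * prod_list (map Pf rs)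
       * Pminv m ((int (sum_list rs) + int s - 2*int N) div int m)) $ N" by (rule V1)
  show "(int (sum_list rs) + int s - 2*int N) div int m < 0 \<Longrightarrow>
      V (replicate t m @ rs @ replicate s 1) m (nat (int (t*m + sum_list rs + s) - 2 * int N)) = 0"
    unfolding V1 z_def[symmetric]
    by (rule zero_case[OF m _ rho, of _ N rs s]) (use zq in \<open>simp_all add: z_def algebra_simps\<close>)
  show "(int (sum_list rs) + int s - 2*int N) div int m \<ge> int (length rs) \<Longrightarrow>
      V (replicate t m @ rs @ replicate s 1) m (nat (int (t*m + sum_list rs + s) - 2 * int N))
      = of_nat (card (tuples m ((0, m - nat ((int (sum_list rs) + int s - 2*int N) mod int m) - 1)
          # map (\<lambda>r. (r, 0)) rs @ replicate (nat ((int (sum_list rs) + int s - 2*int N) div int m) - length rs) (0, 0)) N))"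
    unfolding V1 z_def[symmetric] by (rule tuples_main[OF m rs _ rho, symmetric])
qed

lemma partb0:
  assumes m: "1 \<le> m" and r: "1 \<le> r" "r \<le> m - 1"
    and n: "0 \<le> int (t * m + r + s) - 2 * int N"
    and q: "(int r + int s - 2 * int N) div int m = 0" and sN: "2 * N \<le> s"
  shows "V (replicate t m @ [r] @ replicate s 1) m (nat (int (t * m + r + s) - 2 * int N)) =
            of_nat (Dnum m r (nat (int m - int r - int s + 2 * int N - 1)) N)"
proof -
  define z where "z = int r + int s - 2 * int N"
  have mpos: "0 < int m" using m by simp
  have z0: "0 \<le> z" using sN unfolding z_def by simp
  have zm: "z mod int m = z" using q mpos unfolding z_def[symmetric]
    by (metis add.left_neutral mult_zero_left div_mult_mod_eq)
  have zlt: "z < int m" using pos_mod_bound[OF mpos, of z] zm by simp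
  define b where "b = nat (int m - int r - int s + 2 * int N - 1)"
  have bb: "m - nat (z mod int m) - 1 = b" using zm z0 zlt unfolding b_def z_def by simp
  have rb: "r + b \<le> m - 1" using sN zlt unfolding b_def z_def by simp
  have V1: "V (replicate t m @ [r] @ replicate s 1) m (nat (int (t * m + r + s) - 2 * int N))
     = (Pf b * Pf r * Pminv m 0) $ N"
    using gen(1)[OF m _ , of "[r]" t s N] r n q bb unfolding z_def by simp
  have "of_nat (Dnum m r b N) = Gf m r b $ N" by (simp add: Dnum_def Gf_def)
  also have "\<dots> = (Pf r * Pf b * inverse (Pf m)) $ N" using Gf_eq[OF m rb] by simp
  finally show ?thesis unfolding V1 b_def[symmetric] by (simp add: Pminv_def ac_simps)
qed

theorem corollary1p4:
  fixes m t s N :: nat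
  assumes "m \<ge> 1"
  shows
  "(let xi = replicate t m @ replicate s 1;
        n = int (t * m + s) - 2 * int N;
        q = (int s - 2 * int N) div int m;
        \<rho> = nat ((int s - 2 * int N) mod int m)
    in n \<ge> 0 \<longrightarrow>
       V xi m (nat n) = fps_nth (Pf (m - \<rho> - 1) * Pminv m q) N
     \<and> (q < 0 \<longrightarrow> V xi m (nat n) = 0)
     \<and> (q \<ge> 0 \<longrightarrow> V xi m (nat n) =
           of_nat (card (tuples m ((0, m - \<rho> - 1) # replicate (nat q) (0, 0)) N))))
 \<and> (\<forall>r. 1 \<le> r \<and> r \<le> m - 1 \<longrightarrow>
    (let xi = replicate t m @ [r] @ replicate s 1;
         n = int (t * m + r + s) - 2 * int N;
         q = (int r + int s - 2 * int N) div int m;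
         \<rho> = nat ((int r + int s - 2 * int N) mod int m)
     in n \<ge> 0 \<longrightarrow>
        V xi m (nat n) = fps_nth (Pf r * Pf (m - \<rho> - 1) * Pminv m q) N
      \<and> (q < 0 \<longrightarrow> V xi m (nat n) = 0)
      \<and> (q = 0 \<and> 2 * N \<le> s \<longrightarrow> V xi m (nat n) =
            of_nat (Dnum m r (nat (int m - int r - int s + 2 * int N - 1)) N))
      \<and> (q \<ge> 1 \<longrightarrow> V xi m (nat n) =
            of_nat (card (tuples m ((0, m - \<rho> - 1) # (r, 0) # replicate (nat q - 1) (0, 0)) N)))))
 \<and> (\<forall>rs :: nat list. (\<forall>r \<in> set rs. 1 \<le> r \<and> r \<le> m - 1) \<and> sorted_wrt (\<ge>) rs \<longrightarrow>
    (let d = length rs;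
         xi = replicate t m @ rs @ replicate s 1;
         n = int (t * m + sum_list rs + s) - 2 * int N;
         q = (int (sum_list rs) + int s - 2 * int N) div int m;
         \<rho> = nat ((int (sum_list rs) + int s - 2 * int N) mod int m)
     in n \<ge> 0 \<longrightarrow>
        V xi m (nat n) = fps_nth (Pf (m - \<rho> - 1) * prod_list (map Pf rs) * Pminv m q) N
      \<and> (q < 0 \<longrightarrow> V xi m (nat n) = 0)
      \<and> (q \<ge> int d \<longrightarrow> V xi m (nat n) =
            of_nat (card (tuples m ((0, m - \<rho> - 1) # map (\<lambda>r. (r, 0)) rs
                                   @ replicate (nat q - d) (0, 0)) N)))))"
proof -
  have m: "1 \<le> m" by (rule assms)
  show ?thesis
    unfolding Let_def
    apply (intro conjI allI impI)
    subgoal using gen(1)[OF m, of "[]" t s N] by simp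
    subgoal using gen(2)[OF m, of "[]" t s N] by simp
    subgoal using gen(3)[OF m, of "[]" t s N] by simp
    subgoal for r using gen(1)[OF m, of "[r]" t s N] by (simp add: ac_simps)
    subgoal for r using gen(2)[OF m, of "[r]" t s N] by simp
    subgoal for r using partb0[OF m, of r t s N] by simp
    subgoal for r using gen(3)[OF m, of "[r]" t s N] by simp
    subgoal for rs using gen(1)[OF m, of rs t s N] by simp
    subgoal for rs using gen(2)[OF m, of rs t s N] by simp
    subgoal for rs using gen(3)[OF m, of rs t s N] by simp
    done
qed

end
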